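(* Let $a=a_0+a_1e_1+a_2e_2+a_3e_3\in C\ell_2$. Define $$a^+=\begin{cases}0,& a=0;\\ \dfrac{\bar a}{H_a},& H_a\neq 0;\\ \dfrac{a'}{4(a_0^2+a_3^2)},& H_a=0\text{ and }a\neq 0.\end{cases}$$ Then $a^+$ is the Moore–Penrose inverse of $a$, i.e. $x=a^+$ satisfies $axa=a$, $xax=x$, $(ax)'=ax$, $(xa)'=xa$.
   Context: $C\ell_2$ is the 4-dimensional real associative algebra with basis $1,e_1,e_2,e_3$ and multiplication $e_1^2=e_2^2=1$, $e_3^2=-1$, $e_1e_2=e_3=-e_2e_1$, $e_1e_3=e_2=-e_3e_1$, $e_3e_2=e_1=-e_2e_3$. For $a=a_0+a_1e_1+a_2e_2+a_3e_3$ ($a_i\in\mathbb{R}$): $\bar a=a_0-a_1e_1-a_2e_2-a_3e_3$, $a'=a_0+a_1e_1+a_2e_2-a_3e_3$, $H_a=a\bar a=a_0^2-a_1^2-a_2^2+a_3^2$. A Moore–Penrose inverse of $a$ is an element $x\in C\ell_2$ with $axa=a$, $xax=x$, $(ax)'=ax$, $(xa)'=xa$. *)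

theory Defs
  imports Main Complex_Main
begin

text \<open>Elements of Cl_2: a = a0 + a1 e1 + a2 e2 + a3 e3, stored as four real coordinates.\<close>
datatype cl2 = Cl2 (c0: real) (c1: real) (c2: real) (c3: real)

definition cl2_zero :: cl2 where "cl2_zero = Cl2 0 0 0 0"

text \<open>Multiplication from e1^2=e2^2=1, e3^2=-1, e1e2=e3=-e2e1, e1e3=e2=-e3e1, e3e2=e1=-e2e3.\<close>
definition cl2_mult :: "cl2 \<Rightarrow> cl2 \<Rightarrow> cl2" where
  "cl2_mult a b = Cl2
     (c0 a * c0 b + c1 a * c1 b + c2 a * c2 b - c3 a * c3 b)
     (c0 a * c1 b + c1 a * c0 b - c2 a * c3 b + c3 a * c2 b)
     (c0 a * c2 b + c2 a * c0 b + c1 a * c3 b - c3 a * c1 b)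
     (c0 a * c3 b + c3 a * c0 b + c1 a * c2 b - c2 a * c1 b)"

definition cl2_scale :: "real \<Rightarrow> cl2 \<Rightarrow> cl2" where
  "cl2_scale r a = Cl2 (r * c0 a) (r * c1 a) (r * c2 a) (r * c3 a)"

definition cl2_bar :: "cl2 \<Rightarrow> cl2" where
  "cl2_bar a = Cl2 (c0 a) (- c1 a) (- c2 a) (- c3 a)"

definition cl2_prime :: "cl2 \<Rightarrow> cl2" where
  "cl2_prime a = Cl2 (c0 a) (c1 a) (c2 a) (- c3 a)"

definition cl2_H :: "cl2 \<Rightarrow> real" where
  "cl2_H a = (c0 a)^2 - (c1 a)^2 - (c2 a)^2 + (c3 a)^2"

definition is_MP_inverse :: "cl2 \<Rightarrow> cl2 \<Rightarrow> bool" where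
  "is_MP_inverse a x \<longleftrightarrow>
     cl2_mult (cl2_mult a x) a = a \<and>
     cl2_mult (cl2_mult x a) x = x \<and>
     cl2_prime (cl2_mult a x) = cl2_mult a x \<and>
     cl2_prime (cl2_mult x a) = cl2_mult x a"

definition cl2_plus :: "cl2 \<Rightarrow> cl2" where
  "cl2_plus a =
    (if a = cl2_zero then cl2_zero
     else if cl2_H a \<noteq> 0 then cl2_scale (1 / cl2_H a) (cl2_bar a)
     else cl2_scale (1 / (4 * ((c0 a)^2 + (c3 a)^2))) (cl2_prime a))"

end

theory Submission
  imports Defs
begin
lemma A1:
  fixes p q r s :: real
  assumes H: "p^2 - q^2 - r^2 + s^2 = 0"
  shows "cl2_mult (cl2_mult (Cl2 p q r s) (Cl2 p q r (-s))) (Cl2 p q r s) = cl2_scale (4 * (p^2 + s^2)) (Cl2 p q r s)"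
  unfolding cl2_mult_def cl2_scale_def using H by simp (intro conjI; algebra)
lemma A2:
  fixes p q r s :: real
  assumes H: "p^2 - q^2 - r^2 + s^2 = 0"
  shows "cl2_mult (cl2_mult (Cl2 p q r (-s)) (Cl2 p q r s)) (Cl2 p q r (-s)) = cl2_scale (4 * (p^2 + s^2)) (Cl2 p q r (-s))"
  unfolding cl2_mult_def cl2_scale_def using H by simp (intro conjI; algebra)
lemma B1:
  fixes p q r s :: real
  shows "cl2_mult (cl2_mult (Cl2 p q r s) (Cl2 p (-q) (-r) (-s))) (Cl2 p q r s) = cl2_scale (p^2 - q^2 - r^2 + s^2) (Cl2 p q r s)"
  unfolding cl2_mult_def cl2_scale_def by simp (intro conjI; algebra)
lemma B2:
  fixes p q r s :: real
  shows "cl2_mult (cl2_mult (Cl2 p (-q) (-r) (-s)) (Cl2 p q r s)) (Cl2 p (-q) (-r) (-s)) = cl2_scale (p^2 - q^2 - r^2 + s^2) (Cl2 p (-q) (-r) (-s))"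
  unfolding cl2_mult_def cl2_scale_def by simp (intro conjI; algebra)
lemma ml: "cl2_mult (cl2_scale k x) y = cl2_scale k (cl2_mult x y)"
  unfolding cl2_mult_def cl2_scale_def by (simp add: algebra_simps)
lemma mr: "cl2_mult x (cl2_scale k y) = cl2_scale k (cl2_mult x y)"
  unfolding cl2_mult_def cl2_scale_def by (simp add: algebra_simps)
lemma ss: "cl2_scale k (cl2_scale n x) = cl2_scale (k*n) x"
  unfolding cl2_scale_def by (simp add: algebra_simps)
lemma s1: "cl2_scale 1 x = x"
  unfolding cl2_scale_def by simp
lemma pr2: "c3 (cl2_mult x y) = 0 \<Longrightarrow> cl2_prime (cl2_scale k (cl2_mult x y)) = cl2_scale k (cl2_mult x y)"
  unfolding cl2_prime_def cl2_scale_def by (cases "cl2_mult x y") simp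
lemma pr: "c3 (cl2_mult x y) = 0 \<Longrightarrow> cl2_prime (cl2_mult x y) = cl2_mult x y"
  unfolding cl2_prime_def by (cases "cl2_mult x y") simp

theorem theorem3p1:
  fixes a :: cl2
  shows "is_MP_inverse a (cl2_plus a)"
proof (cases a)
  case (Cl2 p q r s)
  show ?thesis
  proof (cases "a = cl2_zero")
    case True
    then show ?thesis unfolding is_MP_inverse_def cl2_plus_def
      by (simp add: cl2_zero_def cl2_mult_def cl2_prime_def)
  next
    case nz: False
    show ?thesis
    proof (cases "cl2_H a \<noteq> 0")
      case True
      let ?h = "p^2 - q^2 - r^2 + s^2"
      have h: "?h \<noteq> 0" using True Cl2 by (simp add: cl2_H_def)
      have e: "cl2_plus (Cl2 p q r s) = cl2_scale (1 / ?h) (Cl2 p (-q) (-r) (-s))"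
        using nz True Cl2 by (simp add: cl2_plus_def cl2_H_def cl2_bar_def)
      show ?thesis unfolding Cl2 is_MP_inverse_def e ml mr ss B1 B2
        using h by (intro conjI pr2; simp add: s1; simp add: cl2_mult_def)
    next
      case False
      let ?n = "4 * (p^2 + s^2)"
      have H: "p^2 - q^2 - r^2 + s^2 = 0" using False Cl2 by (simp add: cl2_H_def)
      have N: "p^2 + s^2 \<noteq> 0"
      proof
        assume a: "p^2 + s^2 = 0"
        have "p^2 \<ge> 0" "s^2 \<ge> 0" "q^2 \<ge> 0" "r^2 \<ge> 0" by simp_all
        then have "p^2 = 0" "s^2 = 0" "q^2 = 0" "r^2 = 0" using a H by linarith+
        then show False using nz Cl2 by (simp add: cl2_zero_def)
      qed
      have N4: "4 * p^2 + 4 * s^2 \<noteq> 0" using N by (metis distrib_left mult_eq_0_iff zero_neq_numeral)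
      have e: "cl2_plus (Cl2 p q r s) = cl2_scale (1 / ?n) (Cl2 p q r (-s))"
        using nz False Cl2 by (simp add: cl2_plus_def cl2_prime_def)
      show ?thesis unfolding Cl2 is_MP_inverse_def e ml mr ss A1[OF H] A2[OF H]
        using N N4 by (intro conjI pr2; simp add: s1; simp add: cl2_mult_def)
    qed
  qed
qed
end
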